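(* Let $\mathcal{P}$ be a statistical model of mutually equivalent distributions (for all $P_1,P_2\in\mathcal{P}$, $P_1\ll P_2$ and $P_2\ll P_1$). Let $P\in\mathcal{P}$ and $\{P_\epsilon:\epsilon\in[0,\delta)\}\in\mathscr{P}(P,\mathcal{P},s)$. Suppose $\nu:\mathcal{P}\to\mathcal{H}$ is pathwise differentiable at $P$ with an efficient influence function $\phi_P$ that is $P$-almost surely bounded, i.e. $\|\phi_P(Z)\|_{\mathcal{H}}$ is a bounded random variable when $Z\sim P$. Then $\|(P_\epsilon-P)\phi_P-\epsilon\dot{\nu}_P(s)\|_{\mathcal{H}}=o(\epsilon)$ as $\epsilon\to0$.
   Context: $(\mathcal{Z},\mathbf{B})$ is a Polish space, $\mathcal{P}$ dominated by a $\sigma$-finite measure $\lambda$, $\mathcal{H}$ a real separable Hilbert space. For $s\in L^2(P)$, $\mathscr{P}(P,\mathcal{P},s)$ is the set of submodels $\{P_\epsilon:\epsilon\in[0,\delta)\}\subset\mathcal{P}$ with $\|p_\epsilon^{1/2}-p^{1/2}-\epsilon sp^{1/2}/2\|_{L^2(\lambda)}=o(\epsilon)$ ($p_\epsilon,p$ the $\lambda$-densities); tangent set $\{s:\mathscr{P}(P,\mathcal{P},s)\neq\emptyset\}$, tangent space $\dot{\mathcal{P}}_P$ its closed linear span in $L^2(P)$. $\nu$ is pathwise differentiable at $P$ if there is a continuous linear $\dot{\nu}_P:\dot{\mathcal{P}}_P\to\mathcal{H}$ with $\|\nu(P_\epsilon)-\nu(P)-\epsilon\dot{\nu}_P(s)\|_{\mathcal{H}}=o(\epsilon)$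 for every tangent-set $s$ and every submodel in $\mathscr{P}(P,\mathcal{P},s)$; $\dot{\nu}_P^*$ is its adjoint; $\phi_P$ is the efficient influence function if $\dot{\nu}_P^*(h)(z)=\langle h,\phi_P(z)\rangle_{\mathcal{H}}$ for all $h$ and $P$-a.e. $z$. $Q\phi=\int\phi\,dQ$ (Bochner integral). *)

theory Defs
  imports "HOL-Probability.Probability"
begin

definition L2 :: "'z measure \<Rightarrow> ('z \<Rightarrow> real) set" where
  "L2 P = {f. f \<in> borel_measurable P \<and> integrable P (\<lambda>z. (f z)^2)}"

definition l2norm :: "'z measure \<Rightarrow> ('z \<Rightarrow> real) \<Rightarrow> real" where
  "l2norm P f = sqrt (\<integral>z. (f z)^2 \<partial>P)"

definition dens :: "'z measure \<Rightarrow> 'z measure \<Rightarrow> 'z \<Rightarrow> real" where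
  "dens lam Q z = enn2real (RN_deriv lam Q z)"

text \<open>Pe restricted to [0,delta) is a submodel in the set of submodels with score s:
  each Pe eps lies in the model, and
  || p_eps^(1/2) - p^(1/2) - eps s p^(1/2)/2 ||_{L2(lam)} = o(eps) as eps -> 0+.\<close>
definition submodel ::
  "'z measure \<Rightarrow> 'z measure set \<Rightarrow> 'z measure \<Rightarrow> ('z \<Rightarrow> real) \<Rightarrow> (real \<Rightarrow> 'z measure) \<Rightarrow> real \<Rightarrow> bool" where
  "submodel lam Pm P s Pe \<delta> \<longleftrightarrow>
     s \<in> L2 P \<and> \<delta> > 0 \<and> (\<forall>\<epsilon>\<in>{0..<\<delta>}. Pe \<epsilon> \<in> Pm) \<and>
     (\<forall>e>0. eventually (\<lambda>\<epsilon>.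
        (\<integral>\<^sup>+ z. ennreal ((sqrt (dens lam (Pe \<epsilon>) z) - sqrt (dens lam P z)
                             - \<epsilon> * s z * sqrt (dens lam P z) / 2)^2) \<partial>lam)
          \<le> ennreal ((e * \<epsilon>)^2)) (at_right 0))"

definition tangent_set :: "'z measure \<Rightarrow> 'z measure set \<Rightarrow> 'z measure \<Rightarrow> ('z \<Rightarrow> real) set" where
  "tangent_set lam Pm P = {s. s \<in> L2 P \<and> (\<exists>Pe \<delta>. submodel lam Pm P s Pe \<delta>)}"

definition lin_span :: "('z \<Rightarrow> real) set \<Rightarrow> ('z \<Rightarrow> real) set" where
  "lin_span S = {f. \<exists>(n::nat) c g. (\<forall>i<n. g i \<in> S) \<and> f = (\<lambda>z. \<Sum>i<n. c i * g i z)}"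

definition tangent_space :: "'z measure \<Rightarrow> 'z measure set \<Rightarrow> 'z measure \<Rightarrow> ('z \<Rightarrow> real) set" where
  "tangent_space lam Pm P = {g \<in> L2 P. \<forall>e>0. \<exists>h\<in>lin_span (tangent_set lam Pm P).
                                l2norm P (\<lambda>z. g z - h z) < e}"

definition pathwise_derivative ::
  "'z measure \<Rightarrow> 'z measure set \<Rightarrow> ('z measure \<Rightarrow> 'h::real_normed_vector) \<Rightarrow> 'z measure
     \<Rightarrow> (('z \<Rightarrow> real) \<Rightarrow> 'h) \<Rightarrow> bool" where
  "pathwise_derivative lam Pm \<nu> P D \<longleftrightarrow>
     (\<forall>f\<in>tangent_space lam Pm P. \<forall>g\<in>tangent_space lam Pm P. \<forall>a b.
        D (\<lambda>z. a * f z + b * g z) = a *\<^sub>R D f + b *\<^sub>R D g) \<and>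
     (\<exists>K. \<forall>f\<in>tangent_space lam Pm P. norm (D f) \<le> K * l2norm P f) \<and>
     (\<forall>s\<in>tangent_set lam Pm P. \<forall>Pe \<delta>. submodel lam Pm P s Pe \<delta> \<longrightarrow>
        ((\<lambda>\<epsilon>. norm (\<nu> (Pe \<epsilon>) - \<nu> P - \<epsilon> *\<^sub>R D s) / \<epsilon>) \<longlongrightarrow> 0) (at_right 0))"

definition is_adjoint ::
  "'z measure \<Rightarrow> ('z \<Rightarrow> real) set \<Rightarrow> (('z \<Rightarrow> real) \<Rightarrow> 'h::real_inner) \<Rightarrow> ('h \<Rightarrow> 'z \<Rightarrow> real) \<Rightarrow> bool" where
  "is_adjoint P T D Dstar \<longleftrightarrow>
     (\<forall>h. Dstar h \<in> T \<and> (\<forall>f\<in>T. inner (D f) h = (\<integral>z. f z * Dstar h z \<partial>P)))"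

definition efficient_influence_function ::
  "'z measure \<Rightarrow> 'z measure set \<Rightarrow> 'z measure \<Rightarrow> (('z \<Rightarrow> real) \<Rightarrow> 'h::real_inner) \<Rightarrow> ('z \<Rightarrow> 'h) \<Rightarrow> bool" where
  "efficient_influence_function lam Pm P D \<phi> \<longleftrightarrow>
     (\<exists>Dstar. is_adjoint P (tangent_space lam Pm P) D Dstar \<and>
        (\<forall>h. AE z in P. Dstar h z = inner h (\<phi> z)))"

end

theory Submission
  imports Defs
begin

lemma ptwise:
  fixes a b r u t :: real
  assumes "b \<ge> 0" "t > 0" "r = a - b - u"
  shows "\<bar>a^2 - b^2 - 2*u*b\<bar> \<le> t * b^2 + (1/t + 2) * r^2 + 2 * u^2"
proof -
  have a: "a = b + r + u" using assms(3) by simp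
  have e: "a^2 - b^2 - 2*u*b = 2*b*r + (r+u)^2" unfolding a by (simp add: power2_eq_square algebra_simps)
  have 1: "\<bar>2*b*r\<bar> \<le> t*b^2 + r^2/t"
  proof -
    have "0 \<le> (t*b - \<bar>r\<bar>)^2" by simp
    hence "2*t*b*\<bar>r\<bar> \<le> t^2*b^2 + r^2" by (simp add: power2_eq_square algebra_simps)
    hence "2*b*\<bar>r\<bar> \<le> t*b^2 + r^2/t" using assms(2) by (simp add: field_simps power2_eq_square)
    thus ?thesis using assms(1) by (simp add: abs_mult)
  qed
  have 2: "(r+u)^2 \<le> 2*r^2 + 2*u^2"
  proof -
    have "0 \<le> (r-u)^2" by simp
    thus ?thesis by (simp add: power2_eq_square algebra_simps)
  qed
  have "\<bar>2*b*r + (r+u)^2\<bar> \<le> \<bar>2*b*r\<bar> + (r+u)^2" using abs_triangle_ineq[of "2*b*r" "(r+u)^2"] by simp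
  also have "\<dots> \<le> t * b^2 + (1/t + 2) * r^2 + 2 * u^2" using 1 2 by (simp add: field_simps)
  finally show ?thesis using e by simp
qed

lemma abs_le_sq: "\<bar>s::real\<bar> \<le> 1 + s^2"
proof -
  have "0 \<le> (\<bar>s\<bar> - 1)^2" by simp
  hence "2*\<bar>s\<bar> \<le> s^2 + 1" by (simp add: power2_eq_square algebra_simps abs_mult_self)
  thus ?thesis by simp
qed

lemma AE_ac:
  assumes "absolutely_continuous M N" "sets N = sets M" "AE x in M. Q x"
  shows "AE x in N. Q x"
proof -
  from assms(3) obtain A where A: "{x \<in> space M. \<not> Q x} \<subseteq> A" "emeasure M A = 0" "A \<in> sets M"
    by (auto elim: AE_E)
  hence "A \<in> null_sets N" using assms(1) unfolding absolutely_continuous_def by auto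
  moreover have "space N = space M" using assms(2) by (rule sets_eq_imp_space_eq)
  ultimately show ?thesis using A by (intro AE_I[of _ _ A]) auto
qed

lemma integrableI_sequence':
  fixes f :: "'a \<Rightarrow> 'b::{real_normed_vector, complete_space, second_countable_topology}"
    and s :: "nat \<Rightarrow> 'a \<Rightarrow> 'b"
  assumes f[measurable]: "f \<in> borel_measurable M"
  assumes s: "\<And>i. Bochner_Integration.simple_bochner_integrable M (s i)"
  assumes lim: "(\<lambda>i. \<integral>\<^sup>+x. norm (f x - s i x) \<partial>M) \<longlonglongrightarrow> 0" (is "?S \<longlonglongrightarrow> 0")
  shows "integrable M f"
proof -
  let ?s = "\<lambda>n. Bochner_Integration.simple_bochner_integral M (s n)"

  have "\<exists>x. ?s \<longlonglongrightarrow> x"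
    unfolding convergent_eq_Cauchy
  proof (rule metric_CauchyI)
    fix e :: real assume "0 < e"
    then have "0 < ennreal (e / 2)" by auto
    from order_tendstoD(2)[OF lim this]
    obtain M where M: "\<And>n. M \<le> n \<Longrightarrow> ?S n < e / 2"
      by (auto simp: eventually_sequentially)
    show "\<exists>M. \<forall>m\<ge>M. \<forall>n\<ge>M. dist (?s m) (?s n) < e"
    proof (intro exI allI impI)
      fix m n assume m: "M \<le> m" and n: "M \<le> n"
      have "?S n \<noteq> \<infinity>"
        using M[OF n] by auto
      have "norm (?s n - ?s m) \<le> ?S n + ?S m"
        by (intro simple_bochner_integral_bounded s f)
      also have "\<dots> < ennreal (e / 2) + e / 2"
        by (intro add_strict_mono M n m)
      also have "\<dots> = e" using \<open>0<e\<close> by (simp flip: ennreal_plus)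
      finally show "dist (?s n) (?s m) < e"
        using \<open>0<e\<close> by (simp add: dist_norm ennreal_less_iff)
    qed
  qed
  then obtain x where "?s \<longlonglongrightarrow> x" ..
  show ?thesis
    by (rule integrable.intros, rule has_bochner_integral.intros[OF f s lim]) fact
qed

lemma integrableI_bounded':
  fixes f :: "'a \<Rightarrow> 'b::{real_normed_vector, complete_space, second_countable_topology}"
  assumes f[measurable]: "f \<in> borel_measurable M" and fin: "(\<integral>\<^sup>+x. norm (f x) \<partial>M) < \<infinity>"
  shows "integrable M f"
proof -
  from borel_measurable_implies_sequence_metric[OF f, of 0] obtain s where
    s: "\<And>i. simple_function M (s i)" and
    pointwise: "\<And>x. x \<in> space M \<Longrightarrow> (\<lambda>i. s i x) \<longlonglongrightarrow> f x" and
    bound: "\<And>i x. x \<in> space M \<Longrightarrow> norm (s i x) \<le> 2 * norm (f x)"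
    by simp metis

  show ?thesis
  proof (rule integrableI_sequence')
    { fix i
      have "(\<integral>\<^sup>+x. norm (s i x) \<partial>M) \<le> (\<integral>\<^sup>+x. ennreal (2 * norm (f x)) \<partial>M)"
        by (intro nn_integral_mono) (simp add: bound)
      also have "\<dots> = 2 * (\<integral>\<^sup>+x. ennreal (norm (f x)) \<partial>M)"
        by (simp add: ennreal_mult nn_integral_cmult)
      also have "\<dots> < top"
        using fin by (simp add: ennreal_mult_less_top)
      finally have "(\<integral>\<^sup>+x. norm (s i x) \<partial>M) < \<infinity>"
        by simp }
    note fin_s = this

    show "\<And>i. Bochner_Integration.simple_bochner_integrable M (s i)"
      by (rule simple_bochner_integrableI_bounded) fact+

    show "(\<lambda>i. \<integral>\<^sup>+ x. ennreal (norm (f x - s i x)) \<partial>M) \<longlonglongrightarrow> 0"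
    proof (rule nn_integral_dominated_convergence_norm)
      show "\<And>j. AE x in M. norm (s j x) \<le> 2 * norm (f x)"
        using bound by auto
      show "\<And>i. s i \<in> borel_measurable M" "(\<lambda>x. 2 * norm (f x)) \<in> borel_measurable M"
        using s by (auto intro: borel_measurable_simple_function)
      show "(\<integral>\<^sup>+ x. ennreal (2 * norm (f x)) \<partial>M) < \<infinity>"
        using fin by (simp add: nn_integral_cmult ennreal_mult ennreal_mult_less_top)
      show "AE x in M. (\<lambda>i. s i x) \<longlonglongrightarrow> f x"
        using pointwise by auto
    qed fact
  qed fact
qed

lemma integrable_fin_bound:
  fixes f :: "'a \<Rightarrow> 'b::{real_normed_vector, complete_space, second_countable_topology}"
  assumes "finite_measure M" "f \<in> borel_measurable M" "\<And>x. norm (f x) \<le> C"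
  shows "integrable M f"
proof (rule integrableI_bounded'[OF assms(2)])
  interpret finite_measure M by fact
  have "(\<integral>\<^sup>+x. norm (f x) \<partial>M) \<le> (\<integral>\<^sup>+x. ennreal C \<partial>M)"
    using assms(3) by (intro nn_integral_mono ennreal_leI) auto
  also have "\<dots> = ennreal C * emeasure M (space M)" by simp
  also have "\<dots> < \<infinity>" using emeasure_finite[of "space M"] by (simp add: less_top[symmetric] ennreal_mult_eq_top_iff)
  finally show "(\<integral>\<^sup>+x. norm (f x) \<partial>M) < \<infinity>" .
qed

lemma key:
  fixes lam P Q :: "'z::topological_space measure" and \<psi> :: "'z \<Rightarrow> 'h::{real_inner, complete_space, second_countable_topology}"
    and s :: "'z \<Rightarrow> real" and Ds x :: 'h
  assumes lam: "sigma_finite_measure lam" "sets lam = sets borel"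
  and Q: "prob_space Q" "sets Q = sets borel" "absolutely_continuous lam Q"
  and P: "prob_space P" "sets P = sets borel" "absolutely_continuous lam P"
  and psi: "\<psi> \<in> borel_measurable borel" "\<And>z. norm (\<psi> z) \<le> C"
  and s: "s \<in> borel_measurable borel" "integrable P (\<lambda>z. (s z)^2)"
  and x: "x = (\<integral>z. \<psi> z \<partial>Q) - (\<integral>z. \<psi> z \<partial>P) - \<epsilon> *\<^sub>R Ds"
  and adj: "inner Ds x = (\<integral>z. s z * inner (\<psi> z) x \<partial>P)"
  and qmd: "(\<integral>\<^sup>+ z. ennreal ((sqrt (dens lam Q z) - sqrt (dens lam P z) - \<epsilon> * s z * sqrt (dens lam P z) / 2)^2) \<partial>lam) \<le> ennreal ((e*\<epsilon>)^2)"
  and e: "e > 0" "\<epsilon> > 0"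
  shows "norm x \<le> C * (2*e*\<epsilon> + 2*e^2*\<epsilon>^2 + \<epsilon>^2/2 * (\<integral>z. (s z)^2 \<partial>P))"
proof -
  interpret lam: sigma_finite_measure lam by fact
  have C0: "C \<ge> 0" using psi(2)[of undefined] norm_ge_zero[of "\<psi> undefined"] by linarith
  define p where "p = dens lam P"
  define q where "q = dens lam Q"
  define g where "g z = inner (\<psi> z) x" for z
  define r where "r z = sqrt (q z) - sqrt (p z) - \<epsilon> * s z * sqrt (p z) / 2" for z
  define S where "S = (\<integral>z. (s z)^2 \<partial>P)"
  have mb: "\<And>M f. sets M = sets borel \<Longrightarrow> f \<in> borel_measurable borel \<Longrightarrow> (f :: _ \<Rightarrow> 'b::topological_space) \<in> borel_measurable M"
    by (subst measurable_cong_sets[OF _ refl]) auto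
  have [measurable]: "\<psi> \<in> borel_measurable borel" "s \<in> borel_measurable borel" using psi s by auto
  have gb[measurable]: "g \<in> borel_measurable borel" unfolding g_def by measurable
  have sg[measurable]: "(\<lambda>z. s z * g z) \<in> borel_measurable borel" by measurable
  have pm[measurable]: "p \<in> borel_measurable lam" "q \<in> borel_measurable lam"
    unfolding p_def q_def dens_def by measurable
  have sl[measurable]: "s \<in> borel_measurable lam" "g \<in> borel_measurable lam" using mb lam(2) by auto
  have rm[measurable]: "r \<in> borel_measurable lam" unfolding r_def by measurable
  have p0: "\<And>z. p z \<ge> 0" "\<And>z. q z \<ge> 0" unfolding p_def q_def dens_def by auto
  have gbd: "\<And>z. \<bar>g z\<bar> \<le> C * norm x"
  proof -
    fix z
    have "\<bar>g z\<bar> \<le> norm (\<psi> z) * norm x" unfolding g_def by (rule Cauchy_Schwarz_ineq2)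
    also have "\<dots> \<le> C * norm x" using psi(2) by (intro mult_right_mono) auto
    finally show "\<bar>g z\<bar> \<le> C * norm x" .
  qed
  have fQ: "finite_measure Q" "finite_measure P" using Q(1) P(1) by (auto simp: prob_space_def)
  have psiQ: "\<psi> \<in> borel_measurable Q" "\<psi> \<in> borel_measurable P"
    using mb[OF Q(2) psi(1)] mb[OF P(2) psi(1)] by auto
  have gQ: "g \<in> borel_measurable Q" "g \<in> borel_measurable P"
    using mb[OF Q(2) gb] mb[OF P(2) gb] by auto
  have gAE: "\<And>M. AE z in M. norm (g z) \<le> C * norm x" using gbd by simp
  have intQ: "integrable Q \<psi>" "integrable Q g"
    using integrable_fin_bound[OF fQ(1) psiQ(1) psi(2)]
      finite_measure.integrable_const_bound[OF fQ(1) gAE gQ(1)] by auto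
  have intP: "integrable P \<psi>" "integrable P g"
    using integrable_fin_bound[OF fQ(2) psiQ(2) psi(2)]
      finite_measure.integrable_const_bound[OF fQ(2) gAE gQ(2)] by auto
  have intsg: "integrable P (\<lambda>z. s z * g z)"
  proof (rule Bochner_Integration.integrable_bound[of P "\<lambda>z. C * norm x * (1 + (s z)^2)"])
    have "integrable P (\<lambda>z. 1 + (s z)^2)"
      using finite_measure.integrable_const[OF fQ(2)] s(2) by (intro Bochner_Integration.integrable_add) auto
    thus "integrable P (\<lambda>z. C * norm x * (1 + (s z)^2))" by auto
    show "(\<lambda>z. s z * g z) \<in> borel_measurable P" using mb[OF P(2) sg] .
    show "AE z in P. norm (s z * g z) \<le> norm (C * norm x * (1 + (s z)^2))"
    proof (intro AE_I2)
      fix z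
      have "norm (s z * g z) = \<bar>s z\<bar> * \<bar>g z\<bar>" by (simp add: abs_mult)
      also have "\<dots> \<le> (1 + (s z)^2) * (C * norm x)"
        using abs_le_sq[of "s z"] gbd[of z] by (intro mult_mono) auto
      also have "\<dots> = norm (C * norm x * (1 + (s z)^2))" using C0 by (simp add: abs_mult)
      finally show "norm (s z * g z) \<le> norm (C * norm x * (1 + (s z)^2))" .
    qed
  qed
  have eq1: "(norm x)^2 = (\<integral>z. g z \<partial>Q) - (\<integral>z. g z \<partial>P) - \<epsilon> * (\<integral>z. s z * g z \<partial>P)"
  proof -
    have "(norm x)^2 = inner x x" by (simp add: power2_norm_eq_inner)
    also have "\<dots> = inner (\<integral>z. \<psi> z \<partial>Q) x - inner (\<integral>z. \<psi> z \<partial>P) x - \<epsilon> * inner Ds x"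
      by (subst (1) x) (simp add: inner_diff_left)
    also have "\<dots> = (\<integral>z. g z \<partial>Q) - (\<integral>z. g z \<partial>P) - \<epsilon> * (\<integral>z. s z * g z \<partial>P)"
      unfolding adj g_def using intQ intP by simp
    finally show ?thesis .
  qed
  have sQ: "sets Q = sets lam" "sets P = sets lam" using Q P lam by auto
  note sfQ = prob_space_imp_sigma_finite[OF Q(1)] and sfP = prob_space_imp_sigma_finite[OF P(1)]
  have msg: "(\<lambda>z. s z * g z) \<in> borel_measurable lam" by measurable
  have i1: "integrable lam (\<lambda>z. q z * g z)" 
    using lam.RN_deriv_integrable[OF sfQ Q(3) sQ(1) sl(2)] intQ unfolding q_def dens_def by simp
  have i2: "integrable lam (\<lambda>z. p z * g z)" 
    using lam.RN_deriv_integrable[OF sfP P(3) sQ(2) sl(2)] intP unfolding p_def dens_def by simp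
  have i3: "integrable lam (\<lambda>z. p z * (s z * g z))" 
    using lam.RN_deriv_integrable[OF sfP P(3) sQ(2) msg] intsg unfolding p_def dens_def by simp
  have j1: "(\<integral>z. g z \<partial>Q) = (\<integral>z. q z * g z \<partial>lam)"
    using lam.RN_deriv_integral[OF sfQ Q(3) sQ(1) sl(2)] unfolding q_def dens_def by simp
  have j2: "(\<integral>z. g z \<partial>P) = (\<integral>z. p z * g z \<partial>lam)"
    using lam.RN_deriv_integral[OF sfP P(3) sQ(2) sl(2)] unfolding p_def dens_def by simp
  have j3: "(\<integral>z. s z * g z \<partial>P) = (\<integral>z. p z * (s z * g z) \<partial>lam)"
    using lam.RN_deriv_integral[OF sfP P(3) sQ(2) msg] unfolding p_def dens_def by simp
  define f where "f z = q z - p z - \<epsilon> * s z * p z" for z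
  have eq2: "(norm x)^2 = (\<integral>z. g z * f z \<partial>lam)"
  proof -
    have "(norm x)^2 = (\<integral>z. q z * g z - p z * g z - \<epsilon> * (p z * (s z * g z)) \<partial>lam)"
      unfolding eq1 j1 j2 j3 using i1 i2 i3 by simp
    also have "\<dots> = (\<integral>z. g z * f z \<partial>lam)" unfolding f_def by (simp add: algebra_simps)
    finally show ?thesis .
  qed
  have igf: "integrable lam (\<lambda>z. g z * f z)"
  proof -
    have "integrable lam (\<lambda>z. q z * g z - p z * g z - \<epsilon> * (p z * (s z * g z)))" using i1 i2 i3 by auto
    thus ?thesis unfolding f_def by (simp add: algebra_simps)
  qed
  have ip: "integrable lam p" "(\<integral>z. p z \<partial>lam) = 1"
  proof -
    have m1: "(\<lambda>z. 1::real) \<in> borel_measurable lam" by simp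
    have "integrable P (\<lambda>z. 1::real)" by (rule finite_measure.integrable_const[OF fQ(2)])
    thus "integrable lam p" 
      using lam.RN_deriv_integrable[OF sfP P(3) sQ(2) m1] unfolding p_def dens_def by simp
    have "(\<integral>z. 1 \<partial>P) = (1::real)" using prob_space.prob_space[OF P(1)] by simp
    thus "(\<integral>z. p z \<partial>lam) = 1"
      using lam.RN_deriv_integral[OF sfP P(3) sQ(2) m1] unfolding p_def dens_def by simp
  qed
  have ips: "integrable lam (\<lambda>z. p z * (s z)^2)" "(\<integral>z. p z * (s z)^2 \<partial>lam) = S"
  proof -
    have m1: "(\<lambda>z. (s z)^2) \<in> borel_measurable lam" by measurable
    show "integrable lam (\<lambda>z. p z * (s z)^2)" 
      using lam.RN_deriv_integrable[OF sfP P(3) sQ(2) m1] s(2) unfolding p_def dens_def by simp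
    show "(\<integral>z. p z * (s z)^2 \<partial>lam) = S"
      using lam.RN_deriv_integral[OF sfP P(3) sQ(2) m1] unfolding p_def dens_def S_def by simp
  qed
  have qmd': "(\<integral>\<^sup>+ z. ennreal ((r z)^2) \<partial>lam) \<le> ennreal ((e*\<epsilon>)^2)"
    using qmd unfolding r_def p_def q_def .
  have ir: "integrable lam (\<lambda>z. (r z)^2)"
    by (rule integrableI_nonneg) (use qmd' in \<open>auto simp: top.not_eq_extremum intro: le_less_trans\<close>)
  have R: "(\<integral>z. (r z)^2 \<partial>lam) \<le> (e*\<epsilon>)^2"
  proof -
    have "ennreal (\<integral>z. (r z)^2 \<partial>lam) \<le> ennreal ((e*\<epsilon>)^2)"
      using qmd' nn_integral_eq_integral[OF ir] by simp
    thus ?thesis by (simp add: ennreal_le_iff)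
  qed
  define t where "t = e * \<epsilon>"
  have t0: "t > 0" using e unfolding t_def by simp
  define bd where "bd z = t * p z + (1/t + 2) * (r z)^2 + \<epsilon>^2/2 * (p z * (s z)^2)" for z
  have ibd: "integrable lam bd" unfolding bd_def using ip ir ips by auto
  have ptb: "\<And>z. norm (g z * f z) \<le> C * norm x * bd z"
  proof -
    fix z
    have "\<bar>f z\<bar> \<le> bd z"
    proof -
      have "\<bar>(sqrt (q z))^2 - (sqrt (p z))^2 - 2 * (\<epsilon> * s z * sqrt (p z) / 2) * sqrt (p z)\<bar>
          \<le> t * (sqrt (p z))^2 + (1/t + 2) * (r z)^2 + 2 * (\<epsilon> * s z * sqrt (p z) / 2)^2"
        by (rule ptwise) (use t0 p0 in \<open>auto simp: r_def\<close>)
      moreover have "(sqrt (q z))^2 = q z" "(sqrt (p z))^2 = p z" using p0 by auto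
      moreover have "sqrt (p z) * sqrt (p z) = p z" using p0 by simp
      ultimately show ?thesis unfolding f_def bd_def by (simp add: power2_eq_square algebra_simps)
    qed
    hence "\<bar>g z\<bar> * \<bar>f z\<bar> \<le> (C * norm x) * bd z" using gbd[of z] by (intro mult_mono) auto
    thus "norm (g z * f z) \<le> C * norm x * bd z" by (simp add: abs_mult)
  qed
  have a1: "(norm x)^2 \<le> C * norm x * (\<integral>z. bd z \<partial>lam)"
  proof -
    have "(norm x)^2 \<le> norm (\<integral>z. g z * f z \<partial>lam)" unfolding eq2 by simp
    also have "\<dots> \<le> (\<integral>z. norm (g z * f z) \<partial>lam)" by (rule integral_norm_bound)
    also have "\<dots> \<le> (\<integral>z. C * norm x * bd z \<partial>lam)"
      using igf ibd ptb by (intro integral_mono) auto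
    also have "\<dots> = C * norm x * (\<integral>z. bd z \<partial>lam)" by simp
    finally show ?thesis .
  qed
  have a2: "(\<integral>z. bd z \<partial>lam) \<le> 2*e*\<epsilon> + 2*e^2*\<epsilon>^2 + \<epsilon>^2/2 * S"
  proof -
    have "(\<integral>z. bd z \<partial>lam) = t + (1/t + 2) * (\<integral>z. (r z)^2 \<partial>lam) + \<epsilon>^2/2 * S"
      unfolding bd_def using ip ir ips by simp
    also have "\<dots> \<le> t + (1/t + 2) * (e*\<epsilon>)^2 + \<epsilon>^2/2 * S"
      using R t0 by (intro add_mono mult_left_mono) auto
    also have "\<dots> = 2*e*\<epsilon> + 2*e^2*\<epsilon>^2 + \<epsilon>^2/2 * S"
      using t0 unfolding t_def by (simp add: field_simps power2_eq_square)
    finally show ?thesis .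
  qed
  have h: "(norm x)^2 \<le> C * norm x * (2*e*\<epsilon> + 2*e^2*\<epsilon>^2 + \<epsilon>^2/2 * S)"
  proof -
    have "C * norm x * (\<integral>z. bd z \<partial>lam) \<le> C * norm x * (2*e*\<epsilon> + 2*e^2*\<epsilon>^2 + \<epsilon>^2/2 * S)"
      using C0 by (intro mult_left_mono[OF a2]) auto
    with a1 show ?thesis by linarith
  qed
  have "S \<ge> 0" unfolding S_def by simp
  hence K0: "0 \<le> 2*e*\<epsilon> + 2*e^2*\<epsilon>^2 + \<epsilon>^2/2 * S" using e by simp
  show ?thesis
  proof (cases "norm x = 0")
    case True thus ?thesis using C0 K0 unfolding S_def by simp
  next
    case False
    hence pos: "norm x > 0" by simp
    have "norm x * norm x \<le> norm x * (C * (2*e*\<epsilon> + 2*e^2*\<epsilon>^2 + \<epsilon>^2/2 * S))"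
      using h by (simp add: power2_eq_square mult.assoc mult.left_commute)
    thus ?thesis using pos unfolding S_def by (simp add: mult_le_cancel_left_pos)
  qed
qed

theorem lemmaS5:
  fixes lam :: "'z::polish_space measure"
    and Pm :: "'z measure set"
    and \<nu> :: "'z measure \<Rightarrow> 'h::{real_inner, complete_space, second_countable_topology}"
    and P :: "'z measure"
    and s :: "'z \<Rightarrow> real"
    and Pe :: "real \<Rightarrow> 'z measure"
    and \<delta> :: real
    and D :: "('z \<Rightarrow> real) \<Rightarrow> 'h"
    and \<phi> :: "'z \<Rightarrow> 'h"
  assumes lam: "sigma_finite_measure lam" "sets lam = sets borel"
    and model: "\<forall>Q\<in>Pm. prob_space Q \<and> sets Q = sets borel \<and> absolutely_continuous lam Q"
    and equiv: "\<forall>P1\<in>Pm. \<forall>P2\<in>Pm. absolutely_continuous P1 P2 \<and> absolutely_continuous P2 P1"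
    and P: "P \<in> Pm"
    and sub: "submodel lam Pm P s Pe \<delta>"
    and diff: "pathwise_derivative lam Pm \<nu> P D"
    and eif: "efficient_influence_function lam Pm P D \<phi>"
    and meas: "\<phi> \<in> borel_measurable P"
    and bdd: "\<exists>B. AE z in P. norm (\<phi> z) \<le> B"
  shows "((\<lambda>\<epsilon>. norm ((\<integral>z. \<phi> z \<partial>(Pe \<epsilon>)) - (\<integral>z. \<phi> z \<partial>P) - \<epsilon> *\<^sub>R D s) / \<epsilon>)
            \<longlongrightarrow> 0) (at_right 0)"
proof -
  obtain B where B: "AE z in P. norm (\<phi> z) \<le> B" using bdd by blast
  define C where "C = max B 0"
  define \<psi> where "\<psi> z = (if norm (\<phi> z) \<le> C then \<phi> z else 0)" for z
  have mb: "\<And>M f. sets M = sets borel \<Longrightarrow> f \<in> borel_measurable borel \<Longrightarrow> (f :: _ \<Rightarrow> 'b::topological_space) \<in> borel_measurable M"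
    by (subst measurable_cong_sets[OF _ refl]) auto
  have PP: "prob_space P" "sets P = sets borel" "absolutely_continuous lam P" using model P by auto
  have phib[measurable]: "\<phi> \<in> borel_measurable borel"
    using meas PP(2) by (subst (asm) measurable_cong_sets[OF _ refl]) auto
  have psim[measurable]: "\<psi> \<in> borel_measurable borel" unfolding \<psi>_def by measurable
  have psib: "\<And>z. norm (\<psi> z) \<le> C" by (auto simp: \<psi>_def C_def)
  have AEpsi: "AE z in P. \<phi> z = \<psi> z" using B by eventually_elim (auto simp: \<psi>_def C_def)
  have sL2: "s \<in> L2 P" and d0: "\<delta> > 0" and PeM: "\<forall>\<epsilon>\<in>{0..<\<delta>}. Pe \<epsilon> \<in> Pm"
    and qmd: "\<forall>e>0. eventually (\<lambda>\<epsilon>.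
        (\<integral>\<^sup>+ z. ennreal ((sqrt (dens lam (Pe \<epsilon>) z) - sqrt (dens lam P z)
                             - \<epsilon> * s z * sqrt (dens lam P z) / 2)^2) \<partial>lam)
          \<le> ennreal ((e * \<epsilon>)^2)) (at_right 0)"
    using sub unfolding submodel_def by auto
  have sP: "s \<in> borel_measurable P" "integrable P (\<lambda>z. (s z)^2)" using sL2 unfolding L2_def by auto
  have sb[measurable]: "s \<in> borel_measurable borel"
    using sP(1) PP(2) by (subst (asm) measurable_cong_sets[OF _ refl]) auto
  have sTs: "s \<in> tangent_set lam Pm P" unfolding tangent_set_def using sL2 sub by blast
  have sT: "s \<in> tangent_space lam Pm P"
  proof -
    have "s \<in> lin_span (tangent_set lam Pm P)"
      unfolding lin_span_def
      by (rule CollectI, rule exI[of _ 1], rule exI[of _ "\<lambda>_. 1"], rule exI[of _ "\<lambda>_. s"]) (use sTs in auto)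
    moreover have "l2norm P (\<lambda>z. s z - s z) = 0" by (simp add: l2norm_def)
    ultimately show ?thesis unfolding tangent_space_def using sL2 by force
  qed
  obtain Dstar where adj: "is_adjoint P (tangent_space lam Pm P) D Dstar"
    and dae: "\<forall>h. AE z in P. Dstar h z = inner h (\<phi> z)"
    using eif unfolding efficient_influence_function_def by blast
  have adjx: "inner (D s) x = (\<integral>z. s z * inner (\<psi> z) x \<partial>P)" for x
  proof -
    have T: "Dstar x \<in> tangent_space lam Pm P" "inner (D s) x = (\<integral>z. s z * Dstar x z \<partial>P)"
      using adj sT unfolding is_adjoint_def by auto
    have "Dstar x \<in> borel_measurable P" using T(1) unfolding tangent_space_def L2_def by auto
    moreover have "(\<lambda>z. s z * inner (\<psi> z) x) \<in> borel_measurable P"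
      by (rule mb[OF PP(2)]) measurable
    moreover have "AE z in P. s z * Dstar x z = s z * inner (\<psi> z) x"
      using dae[rule_format, of x] AEpsi by eventually_elim (simp add: inner_commute)
    ultimately show ?thesis unfolding T(2) using sP(1) by (intro integral_cong_AE) auto
  qed
  define S where "S = (\<integral>z. (s z)^2 \<partial>P)"
  have S0: "S \<ge> 0" unfolding S_def by simp
  define X where "X \<epsilon> = (\<integral>z. \<phi> z \<partial>(Pe \<epsilon>)) - (\<integral>z. \<phi> z \<partial>P) - \<epsilon> *\<^sub>R D s" for \<epsilon>
  have bound: "eventually (\<lambda>\<epsilon>. norm (X \<epsilon>) \<le> C * (2*e*\<epsilon> + 2*e^2*\<epsilon>^2 + \<epsilon>^2/2 * S)) (at_right 0)"
    if e: "e > 0" for e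
    using qmd[rule_format, OF e] eventually_at_right_real[OF d0]
  proof eventually_elim
    case (elim \<epsilon>)
    hence eps: "\<epsilon> > 0" "\<epsilon> < \<delta>" by auto
    hence QM: "Pe \<epsilon> \<in> Pm" using PeM by auto
    have QQ: "prob_space (Pe \<epsilon>)" "sets (Pe \<epsilon>) = sets borel" "absolutely_continuous lam (Pe \<epsilon>)"
      using model QM by auto
    have ac: "absolutely_continuous P (Pe \<epsilon>)" using equiv QM P by auto
    have AEQ: "AE z in Pe \<epsilon>. \<phi> z = \<psi> z" by (rule AE_ac[OF ac _ AEpsi]) (use QQ PP in auto)
    have i1: "(\<integral>z. \<phi> z \<partial>(Pe \<epsilon>)) = (\<integral>z. \<psi> z \<partial>(Pe \<epsilon>))"
      by (rule integral_cong_AE[OF mb[OF QQ(2) phib] mb[OF QQ(2) psim] AEQ])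
    have i2: "(\<integral>z. \<phi> z \<partial>P) = (\<integral>z. \<psi> z \<partial>P)"
      by (rule integral_cong_AE[OF mb[OF PP(2) phib] mb[OF PP(2) psim] AEpsi])
    have "norm ((\<integral>z. \<psi> z \<partial>(Pe \<epsilon>)) - (\<integral>z. \<psi> z \<partial>P) - \<epsilon> *\<^sub>R D s) \<le> C * (2*e*\<epsilon> + 2*e^2*\<epsilon>^2 + \<epsilon>^2/2 * S)"
      unfolding S_def
      by (rule key[OF lam QQ PP psim psib sb sP(2) refl adjx _ e eps(1)]) (use elim in simp)
    thus ?case unfolding X_def i1 i2 .
  qed
  show ?thesis
    unfolding X_def[symmetric]
  proof (rule tendstoI)
    fix c :: real assume c: "c > 0"
    define e where "e = min 1 (c / (5 * (C + 1)))"
    have C0: "C \<ge> 0" by (simp add: C_def)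
    have e0: "e > 0" "e \<le> 1" "e \<le> c / (5 * (C + 1))" using c C0 by (auto simp: e_def)
    have d1: "0 < min 1 (e / (S + 1))" using e0 S0 by simp
    show "eventually (\<lambda>\<epsilon>. dist (norm (X \<epsilon>) / \<epsilon>) 0 < c) (at_right 0)"
      using bound[OF e0(1)] eventually_at_right_real[OF d1]
    proof eventually_elim
      case (elim \<epsilon>)
      hence eps: "\<epsilon> > 0" "\<epsilon> < 1" "\<epsilon> < e / (S + 1)" by auto
      have "norm (X \<epsilon>) / \<epsilon> \<le> C * (2*e + 2*e^2*\<epsilon> + \<epsilon>/2 * S)"
      proof -
        have "norm (X \<epsilon>) \<le> C * (2*e*\<epsilon> + 2*e^2*\<epsilon>^2 + \<epsilon>^2/2 * S)" using elim by blast
        also have "\<dots> = (C * (2*e + 2*e^2*\<epsilon> + \<epsilon>/2 * S)) * \<epsilon>"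
          by (simp add: algebra_simps power2_eq_square)
        finally show ?thesis by (simp add: pos_divide_le_eq[OF eps(1)])
      qed
      also have "\<dots> \<le> C * (5 * e)"
      proof (rule mult_left_mono[OF _ C0])
        have "e^2*\<epsilon> \<le> e" 
        proof -
          have "e * \<epsilon> \<le> 1" using e0 eps by (simp add: mult_le_one)
          hence "e * (e * \<epsilon>) \<le> e * 1" using e0 by (intro mult_left_mono) auto
          thus ?thesis by (simp add: power2_eq_square mult.assoc)
        qed
        moreover have "\<epsilon> * S \<le> e"
        proof -
          have "\<epsilon> * (S + 1) < e" using eps S0 by (simp add: less_divide_eq)
          thus ?thesis using eps by (simp add: algebra_simps)
        qed
        ultimately show "2*e + 2*e^2*\<epsilon> + \<epsilon>/2 * S \<le> 5 * e" using e0 by simp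
      qed
      also have "\<dots> < c"
      proof -
        have "5 * e * (C + 1) \<le> c" using e0 C0 by (simp add: le_divide_eq algebra_simps)
        hence "5 * e * C < c" using e0 by (simp add: algebra_simps)
        thus ?thesis by (simp add: mult.commute)
      qed
      finally show ?case using eps by simp
    qed
  qed
qed

end
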